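(* Let $a<b$, $\gamma>0$, $\mu=e^{-\gamma(b-a)}$, let $k\ge 1$ be an integer, and let $C_a,C_b\in\mathbb{R}$ be given. With the operators $I^L, I^R, I^0, \mathcal{D}_L, \mathcal{D}_R, \mathcal{D}_0$ defined in the context (with boundary data $C_a$, $C_b$): (i) If $v\in\mathcal{C}^{k+1}[a,b]$, then for all $x\in[a,b]$, \[ \mathcal{D}_{L}[v,\gamma](x) = -\sum_{p=1}^{k}\left(-\frac{1}{\gamma}\right)^{p}\left(\partial_x^{p}v(x)-\partial_x^{p}v(a)e^{-\gamma(x-a)}\right) - \left(-\frac{1}{\gamma}\right)^{k+1} I^{L}[\partial_x^{k+1}v,\gamma](x) + C_a e^{-\gamma(x-a)}, \] \[ \mathcal{D}_{R}[v,\gamma](x) = -\sum_{p=1}^{k}\left(\frac{1}{\gamma}\right)^{p}\left(\partial_x^{p}v(x)-\partial_x^{p}v(b)e^{-\gamma(b-x)}\right) - \left(\frac{1}{\gamma}\right)^{k+1} I^{R}[\partial_x^{k+1}v,\gamma](x) + C_b e^{-\gamma(b-x)}. \] (ii) If $v\in\mathcal{C}^{2k+2}[a,b]$, then for all $x\in[a,b]$, \begin{align*} \mathcal{D}_{0}[v,\gamma](x) =& -\sum_{p=1}^{k}\left(\frac{1}{\gamma}\right)^{2p}\left(\partial_x^{2p}v(x) + \frac{\mu\,\partial_x^{2p}v(b)-\partial_x^{2p}v(a)}{1-\mu^2}e^{-\gamma(x-a)} + \frac{\mu\,\partial_x^{2p}v(a)-\partial_x^{2p}v(b)}{1-\mu^2}e^{-\gamma(b-x)}\right)\\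 & - \frac{\mu C_b - C_a}{1-\mu^2}e^{-\gamma(x-a)} - \frac{\mu C_a - C_b}{1-\mu^2}e^{-\gamma(b-x)}\\ & - \left(\frac{1}{\gamma}\right)^{2k+2}\Big( I^0[\partial_x^{2k+2}v,\gamma](x) + \frac{\mu I^0[\partial_x^{2k+2}v,\gamma](b) - I^0[\partial_x^{2k+2}v,\gamma](a)}{1-\mu^2}e^{-\gamma(x-a)}\\ &\qquad\qquad + \frac{\mu I^0[\partial_x^{2k+2}v,\gamma](a) - I^0[\partial_x^{2k+2}v,\gamma](b)}{1-\mu^2}e^{-\gamma(b-x)}\Big). \end{align*}
   Context: Fix $a<b$, $\gamma>0$ and $\mu=e^{-\gamma(b-a)}$. For a continuous function $v$ on $[a,b]$ define $I^{L}[v,\gamma](x)=\gamma\int_a^x e^{-\gamma(x-y)}v(y)\,dy$, $I^{R}[v,\gamma](x)=\gamma\int_x^b e^{-\gamma(y-x)}v(y)\,dy$, $I^{0}[v,\gamma](x)=\frac{\gamma}{2}\int_a^b e^{-\gamma|x-y|}v(y)\,dy$. Given real numbers $C_a, C_b$, define $\mathcal{D}_L[v,\gamma](x)=v(x)-I^L[v,\gamma](x)-A_L e^{-\gamma(x-a)}$ with $A_L=v(a)-C_a$ (so that $\mathcal{D}_L[v,\gamma](a)=C_a$); $\mathcal{D}_R[v,\gamma](x)=v(x)-I^R[v,\gamma](x)-B_R e^{-\gamma(b-x)}$ with $B_R=v(b)-C_b$ (so that $\mathcal{D}_R[v,\gamma](b)=C_b$); $\mathcal{D}_0[v,\gamma](x)=v(x)-I^0[v,\gamma](x)-A_0e^{-\gamma(x-a)}-B_0e^{-\gamma(b-x)}$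 with $A_0=\frac{1}{1-\mu^2}\big(\mu(I^0[v,\gamma](b)-v(b)+C_b)-(I^0[v,\gamma](a)-v(a)+C_a)\big)$, $B_0=\frac{1}{1-\mu^2}\big(\mu(I^0[v,\gamma](a)-v(a)+C_a)-(I^0[v,\gamma](b)-v(b)+C_b)\big)$ (so that $\mathcal{D}_0[v,\gamma](a)=C_a$ and $\mathcal{D}_0[v,\gamma](b)=C_b$). Here $\partial_x^p v(a)$, $\partial_x^p v(b)$ denote one-sided derivatives at the endpoints. *)

theory Defs
  imports "HOL-Analysis.Analysis"
begin

definition IL :: "real \<Rightarrow> (real \<Rightarrow> real) \<Rightarrow> real \<Rightarrow> real \<Rightarrow> real" where
  "IL a v \<gamma> x = \<gamma> * integral {a..x} (\<lambda>y. exp (-\<gamma>*(x-y)) * v y)"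

definition IR :: "real \<Rightarrow> (real \<Rightarrow> real) \<Rightarrow> real \<Rightarrow> real \<Rightarrow> real" where
  "IR b v \<gamma> x = \<gamma> * integral {x..b} (\<lambda>y. exp (-\<gamma>*(y-x)) * v y)"

definition I0 :: "real \<Rightarrow> real \<Rightarrow> (real \<Rightarrow> real) \<Rightarrow> real \<Rightarrow> real \<Rightarrow> real" where
  "I0 a b v \<gamma> x = \<gamma>/2 * integral {a..b} (\<lambda>y. exp (-\<gamma>*\<bar>x-y\<bar>) * v y)"

definition DL :: "real \<Rightarrow> real \<Rightarrow> (real \<Rightarrow> real) \<Rightarrow> real \<Rightarrow> real \<Rightarrow> real" where
  "DL a Ca v \<gamma> x = v x - IL a v \<gamma> x - (v a - Ca) * exp (-\<gamma>*(x-a))"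

definition DR :: "real \<Rightarrow> real \<Rightarrow> (real \<Rightarrow> real) \<Rightarrow> real \<Rightarrow> real \<Rightarrow> real" where
  "DR b Cb v \<gamma> x = v x - IR b v \<gamma> x - (v b - Cb) * exp (-\<gamma>*(b-x))"

definition D0 :: "real \<Rightarrow> real \<Rightarrow> real \<Rightarrow> real \<Rightarrow> (real \<Rightarrow> real) \<Rightarrow> real \<Rightarrow> real \<Rightarrow> real" where
  "D0 a b Ca Cb v \<gamma> x =
     (let \<mu> = exp (-\<gamma>*(b-a));
          A0 = (\<mu> * (I0 a b v \<gamma> b - v b + Cb) - (I0 a b v \<gamma> a - v a + Ca)) / (1 - \<mu>^2);
          B0 = (\<mu> * (I0 a b v \<gamma> a - v a + Ca) - (I0 a b v \<gamma> b - v b + Cb)) / (1 - \<mu>^2)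
      in v x - I0 a b v \<gamma> x - A0 * exp (-\<gamma>*(x-a)) - B0 * exp (-\<gamma>*(b-x)))"

text \<open>v is in C^n[a,b] with derivatives Dv j (j = 0..n), Dv 0 = v on [a,b];
  derivatives at the endpoints are one-sided (derivative within [a,b]).\<close>
definition Cn_derivs :: "nat \<Rightarrow> real \<Rightarrow> real \<Rightarrow> (real \<Rightarrow> real) \<Rightarrow> (nat \<Rightarrow> real \<Rightarrow> real) \<Rightarrow> bool" where
  "Cn_derivs n a b v Dv \<longleftrightarrow>
     (\<forall>x\<in>{a..b}. Dv 0 x = v x) \<and>
     (\<forall>j<n. \<forall>x\<in>{a..b}. (Dv j has_real_derivative Dv (Suc j) x) (at x within {a..b})) \<and>
     continuous_on {a..b} (Dv n)"

end

theory Submission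
  imports Defs
begin

lemma IL_parts:
  assumes ax: "a \<le> x" and xb: "x \<le> b"
    and d: "\<forall>y\<in>{a..b}. (w has_real_derivative w' y) (at y within {a..b})"
    and c: "continuous_on {a..b} w'"
  shows "IL a w' \<gamma> x = \<gamma>*(w x - w a * exp(-\<gamma>*(x-a))) - \<gamma> * IL a w \<gamma> x"
proof -
  have sub: "{a..x} \<subseteq> {a..b}" using assms by auto
  have d2: "\<And>y. y \<in> {a..x} \<Longrightarrow> (w has_real_derivative w' y) (at y within {a..x})"
    using d sub by (meson has_field_derivative_subset subsetD)
  have cw: "continuous_on {a..x} w" by (rule DERIV_continuous_on[OF d2])
  have cw': "continuous_on {a..x} w'" using continuous_on_subset[OF c sub] .
  have i1: "(\<lambda>y. exp(-\<gamma>*(x-y)) * w y) integrable_on {a..x}"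
    by (intro integrable_continuous_interval continuous_intros cw)
  have i2: "(\<lambda>y. exp(-\<gamma>*(x-y)) * w' y) integrable_on {a..x}"
    by (intro integrable_continuous_interval continuous_intros cw')
  have der: "((\<lambda>y. exp(-\<gamma>*(x-y)) * w y) has_vector_derivative
      (\<gamma>*exp(-\<gamma>*(x-y))*w y + exp(-\<gamma>*(x-y))*w' y)) (at y within {a..x})" if "y \<in> {a..x}" for y
    unfolding has_real_derivative_iff_has_vector_derivative[symmetric]
    by (rule derivative_eq_intros d2[OF that] refl | simp add: algebra_simps)+
  have "((\<lambda>y. \<gamma>*exp(-\<gamma>*(x-y))*w y + exp(-\<gamma>*(x-y))*w' y) has_integral
       ((\<lambda>y. exp(-\<gamma>*(x-y)) * w y) x - (\<lambda>y. exp(-\<gamma>*(x-y)) * w y) a)) {a..x}"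
    by (rule fundamental_theorem_of_calculus[OF ax der])
  then have "integral {a..x} (\<lambda>y. \<gamma>*exp(-\<gamma>*(x-y))*w y + exp(-\<gamma>*(x-y))*w' y)
     = w x - exp(-\<gamma>*(x-a)) * w a" by (simp add: integral_unique)
  moreover have "integral {a..x} (\<lambda>y. \<gamma>*exp(-\<gamma>*(x-y))*w y + exp(-\<gamma>*(x-y))*w' y)
     = \<gamma> * integral {a..x} (\<lambda>y. exp(-\<gamma>*(x-y)) * w y) + integral {a..x} (\<lambda>y. exp(-\<gamma>*(x-y)) * w' y)"
  proof -
    have "integral {a..x} (\<lambda>y. \<gamma>*exp(-\<gamma>*(x-y))*w y + exp(-\<gamma>*(x-y))*w' y)
      = integral {a..x} (\<lambda>y. \<gamma>*(exp(-\<gamma>*(x-y))*w y)) + integral {a..x} (\<lambda>y. exp(-\<gamma>*(x-y)) * w' y)"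
      using integral_add[OF integrable_on_cmult_left[OF i1, of \<gamma>] i2] by (simp add: mult.assoc)
    then show ?thesis by simp
  qed
  ultimately have e: "integral {a..x} (\<lambda>y. exp(-\<gamma>*(x-y)) * w' y) = w x - exp(-\<gamma>*(x-a)) * w a - \<gamma> * integral {a..x} (\<lambda>y. exp(-\<gamma>*(x-y)) * w y)" by linarith
  show ?thesis unfolding IL_def e by (simp add: algebra_simps)
qed

lemma IR_parts:
  assumes ax: "a \<le> x" and xb: "x \<le> b"
    and d: "\<forall>y\<in>{a..b}. (w has_real_derivative w' y) (at y within {a..b})"
    and c: "continuous_on {a..b} w'"
  shows "IR b w' \<gamma> x = \<gamma>*(w b * exp(-\<gamma>*(b-x)) - w x) + \<gamma> * IR b w \<gamma> x"
proof -
  have sub: "{x..b} \<subseteq> {a..b}" using assms by auto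
  have d2: "\<And>y. y \<in> {x..b} \<Longrightarrow> (w has_real_derivative w' y) (at y within {x..b})"
    using d sub by (meson has_field_derivative_subset subsetD)
  have cw: "continuous_on {x..b} w" by (rule DERIV_continuous_on[OF d2])
  have cw': "continuous_on {x..b} w'" using continuous_on_subset[OF c sub] .
  have i1: "(\<lambda>y. exp(-\<gamma>*(y-x)) * w y) integrable_on {x..b}"
    by (intro integrable_continuous_interval continuous_intros cw)
  have i2: "(\<lambda>y. exp(-\<gamma>*(y-x)) * w' y) integrable_on {x..b}"
    by (intro integrable_continuous_interval continuous_intros cw')
  have der: "((\<lambda>y. exp(-\<gamma>*(y-x)) * w y) has_vector_derivative
      (-\<gamma>*exp(-\<gamma>*(y-x))*w y + exp(-\<gamma>*(y-x))*w' y)) (at y within {x..b})" if "y \<in> {x..b}" for y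
    unfolding has_real_derivative_iff_has_vector_derivative[symmetric]
    by (rule derivative_eq_intros d2[OF that] refl | simp add: algebra_simps)+
  have "((\<lambda>y. -\<gamma>*exp(-\<gamma>*(y-x))*w y + exp(-\<gamma>*(y-x))*w' y) has_integral
       ((\<lambda>y. exp(-\<gamma>*(y-x)) * w y) b - (\<lambda>y. exp(-\<gamma>*(y-x)) * w y) x)) {x..b}"
    by (rule fundamental_theorem_of_calculus[OF xb der])
  then have "integral {x..b} (\<lambda>y. -\<gamma>*exp(-\<gamma>*(y-x))*w y + exp(-\<gamma>*(y-x))*w' y)
     = exp(-\<gamma>*(b-x)) * w b - w x" by (simp add: integral_unique)
  moreover have "integral {x..b} (\<lambda>y. -\<gamma>*exp(-\<gamma>*(y-x))*w y + exp(-\<gamma>*(y-x))*w' y)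
     = -\<gamma> * integral {x..b} (\<lambda>y. exp(-\<gamma>*(y-x)) * w y) + integral {x..b} (\<lambda>y. exp(-\<gamma>*(y-x)) * w' y)"
  proof -
    have "integral {x..b} (\<lambda>y. -\<gamma>*exp(-\<gamma>*(y-x))*w y + exp(-\<gamma>*(y-x))*w' y)
      = integral {x..b} (\<lambda>y. -\<gamma>*(exp(-\<gamma>*(y-x))*w y)) + integral {x..b} (\<lambda>y. exp(-\<gamma>*(y-x)) * w' y)"
      using integral_add[OF integrable_on_cmult_left[OF i1, of "-\<gamma>"] i2] by (simp add: mult.assoc)
    then show ?thesis by simp
  qed
  ultimately have e: "integral {x..b} (\<lambda>y. exp(-\<gamma>*(y-x)) * w' y) = exp(-\<gamma>*(b-x)) * w b - w x + \<gamma> * integral {x..b} (\<lambda>y. exp(-\<gamma>*(y-x)) * w y)" by linarith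
  show ?thesis unfolding IR_def e by (simp add: algebra_simps)
qed

lemma I0_split:
  assumes ax: "a \<le> x" and xb: "x \<le> b" and c: "continuous_on {a..b} w"
  shows "I0 a b w \<gamma> x = (IL a w \<gamma> x + IR b w \<gamma> x) / 2"
proof -
  have i: "(\<lambda>y. exp (-\<gamma>*\<bar>x-y\<bar>) * w y) integrable_on {a..b}"
    by (intro integrable_continuous_interval continuous_intros c)
  have "integral {a..b} (\<lambda>y. exp (-\<gamma>*\<bar>x-y\<bar>) * w y) =
     integral {a..x} (\<lambda>y. exp (-\<gamma>*\<bar>x-y\<bar>) * w y) + integral {x..b} (\<lambda>y. exp (-\<gamma>*\<bar>x-y\<bar>) * w y)"
    using Henstock_Kurzweil_Integration.integral_combine[OF ax xb i] by simp
  also have "integral {a..x} (\<lambda>y. exp (-\<gamma>*\<bar>x-y\<bar>) * w y) = integral {a..x} (\<lambda>y. exp (-\<gamma>*(x-y)) * w y)"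
    by (rule integral_cong) auto
  also have "integral {x..b} (\<lambda>y. exp (-\<gamma>*\<bar>x-y\<bar>) * w y) = integral {x..b} (\<lambda>y. exp (-\<gamma>*(y-x)) * w y)"
    by (rule integral_cong) auto
  finally show ?thesis unfolding I0_def IL_def IR_def by (simp add: algebra_simps)
qed

lemma Cn_der: "Cn_derivs n a b v Dv \<Longrightarrow> j < n \<Longrightarrow>
  \<forall>y\<in>{a..b}. (Dv j has_real_derivative Dv (Suc j) y) (at y within {a..b})"
  unfolding Cn_derivs_def by blast

lemma Cn_cont: "Cn_derivs n a b v Dv \<Longrightarrow> j \<le> n \<Longrightarrow> continuous_on {a..b} (Dv j)"
proof (cases "j = n")
  case True
  assume "Cn_derivs n a b v Dv" then show ?thesis using True unfolding Cn_derivs_def by blast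
next
  case False
  assume h: "Cn_derivs n a b v Dv" "j \<le> n"
  then have "j < n" using False by simp
  from Cn_der[OF h(1) this] show ?thesis by (intro DERIV_continuous_on) blast
qed

lemma IL_step:
  assumes C: "Cn_derivs n a b v Dv" and j: "Suc j \<le> n" and x: "x \<in> {a..b}" and g: "\<gamma> > 0"
  shows "IL a (Dv j) \<gamma> x = Dv j x - Dv j a * exp(-\<gamma>*(x-a)) - IL a (Dv (Suc j)) \<gamma> x / \<gamma>"
proof -
  have "IL a (Dv (Suc j)) \<gamma> x = \<gamma>*(Dv j x - Dv j a * exp(-\<gamma>*(x-a))) - \<gamma> * IL a (Dv j) \<gamma> x"
    using x Cn_der[OF C, of j] Cn_cont[OF C j] j by (intro IL_parts) auto
  then show ?thesis using g by (simp add: field_simps)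
qed

lemma IR_step:
  assumes C: "Cn_derivs n a b v Dv" and j: "Suc j \<le> n" and x: "x \<in> {a..b}" and g: "\<gamma> > 0"
  shows "IR b (Dv j) \<gamma> x = Dv j x - Dv j b * exp(-\<gamma>*(b-x)) + IR b (Dv (Suc j)) \<gamma> x / \<gamma>"
proof -
  have "IR b (Dv (Suc j)) \<gamma> x = \<gamma>*(Dv j b * exp(-\<gamma>*(b-x)) - Dv j x) + \<gamma> * IR b (Dv j) \<gamma> x"
    using x Cn_der[OF C, of j] Cn_cont[OF C j] j by (intro IR_parts) auto
  then show ?thesis using g by (simp add: field_simps)
qed

lemma I0_step:
  assumes C: "Cn_derivs n a b v Dv" and j: "Suc (Suc j) \<le> n" and x: "x \<in> {a..b}" and g: "\<gamma> > 0"
  shows "I0 a b (Dv j) \<gamma> x = Dv j x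
     + (- Dv j a / 2 + Dv (Suc j) a / (2*\<gamma>)) * exp(-\<gamma>*(x-a))
     + (- Dv j b / 2 - Dv (Suc j) b / (2*\<gamma>)) * exp(-\<gamma>*(b-x))
     + (1/\<gamma>^2) * I0 a b (Dv (Suc (Suc j))) \<gamma> x"
proof -
  have xs: "a \<le> x" "x \<le> b" using x by auto
  have s1: "I0 a b (Dv j) \<gamma> x = (IL a (Dv j) \<gamma> x + IR b (Dv j) \<gamma> x) / 2"
    by (rule I0_split[OF xs Cn_cont[OF C]]) (use j in auto)
  have s2: "I0 a b (Dv (Suc (Suc j))) \<gamma> x = (IL a (Dv (Suc (Suc j))) \<gamma> x + IR b (Dv (Suc (Suc j))) \<gamma> x) / 2"
    by (rule I0_split[OF xs Cn_cont[OF C]]) (use j in auto)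
  have l1: "IL a (Dv j) \<gamma> x = Dv j x - Dv j a * exp(-\<gamma>*(x-a)) - IL a (Dv (Suc j)) \<gamma> x / \<gamma>"
    using IL_step[OF C _ x g, of j] j by simp
  have r1: "IR b (Dv j) \<gamma> x = Dv j x - Dv j b * exp(-\<gamma>*(b-x)) + IR b (Dv (Suc j)) \<gamma> x / \<gamma>"
    using IR_step[OF C _ x g, of j] j by simp
  show ?thesis unfolding s1 s2 l1 r1 IL_step[OF C j x g] IR_step[OF C j x g]
    using g by (simp add: field_simps power2_eq_square)
qed

lemma IL_v: assumes C: "Cn_derivs n a b v Dv" and x: "x \<in> {a..b}"
  shows "IL a v \<gamma> x = IL a (Dv 0) \<gamma> x"
  unfolding IL_def using C x by (auto simp: Cn_derivs_def intro!: arg_cong[where f="\<lambda>t. \<gamma> * t"] integral_cong)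

lemma IR_v: assumes C: "Cn_derivs n a b v Dv" and x: "x \<in> {a..b}"
  shows "IR b v \<gamma> x = IR b (Dv 0) \<gamma> x"
  unfolding IR_def using C x by (auto simp: Cn_derivs_def intro!: arg_cong[where f="\<lambda>t. \<gamma> * t"] integral_cong)

lemma I0_v: assumes C: "Cn_derivs n a b v Dv"
  shows "I0 a b v \<gamma> x = I0 a b (Dv 0) \<gamma> x"
  unfolding I0_def using C by (auto simp: Cn_derivs_def intro!: arg_cong[where f="\<lambda>t. \<gamma>/2 * t"] integral_cong)

lemma DL_gen:
  assumes C: "Cn_derivs n a b v Dv" and x: "x \<in> {a..b}" and g: "\<gamma> > 0"
  shows "m+1 \<le> n \<Longrightarrow> DL a Ca v \<gamma> x =
          - (\<Sum>p=1..m. (-1/\<gamma>)^p * (Dv p x - Dv p a * exp (-\<gamma>*(x-a))))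
          - (-1/\<gamma>)^(m+1) * IL a (Dv (m+1)) \<gamma> x + Ca * exp (-\<gamma>*(x-a))"
proof (induction m)
  case 0
  have v: "v x = Dv 0 x" "v a = Dv 0 a" using C x unfolding Cn_derivs_def by auto
  show ?case unfolding DL_def IL_v[OF C x] v IL_step[OF C _ x g, of 0, simplified, OF 0[simplified]]
    using g by (simp add: field_simps)
next
  case (Suc m)
  have e: "IL a (Dv (m+1)) \<gamma> x = Dv (m+1) x - Dv (m+1) a * exp(-\<gamma>*(x-a)) - IL a (Dv (m+2)) \<gamma> x / \<gamma>"
    using IL_step[OF C _ x g, of "m+1"] Suc.prems by simp
  have mm: "m+1 \<le> n" using Suc.prems by simp
  show ?case unfolding Suc.IH[OF mm] e using g
    by (simp add: field_simps sum.cl_ivl_Suc)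
qed

lemma DR_gen:
  assumes C: "Cn_derivs n a b v Dv" and x: "x \<in> {a..b}" and g: "\<gamma> > 0"
  shows "m+1 \<le> n \<Longrightarrow> DR b Cb v \<gamma> x =
          - (\<Sum>p=1..m. (1/\<gamma>)^p * (Dv p x - Dv p b * exp (-\<gamma>*(b-x))))
          - (1/\<gamma>)^(m+1) * IR b (Dv (m+1)) \<gamma> x + Cb * exp (-\<gamma>*(b-x))"
proof (induction m)
  case 0
  have v: "v x = Dv 0 x" "v b = Dv 0 b" using C x unfolding Cn_derivs_def by auto
  show ?case unfolding DR_def IR_v[OF C x] v IR_step[OF C _ x g, of 0, simplified, OF 0[simplified]]
    using g by (simp add: field_simps)
next
  case (Suc m)
  have e: "IR b (Dv (m+1)) \<gamma> x = Dv (m+1) x - Dv (m+1) b * exp(-\<gamma>*(b-x)) + IR b (Dv (m+2)) \<gamma> x / \<gamma>"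
    using IR_step[OF C _ x g, of "m+1"] Suc.prems by simp
  have mm: "m+1 \<le> n" using Suc.prems by simp
  show ?case unfolding Suc.IH[OF mm] e using g
    by (simp add: field_simps sum.cl_ivl_Suc)
qed

definition Qn :: "real \<Rightarrow> real \<Rightarrow> real \<Rightarrow> real \<Rightarrow> real \<Rightarrow> real \<Rightarrow> real \<Rightarrow> real" where
  "Qn \<gamma> a b x hx ha hb = hx + (exp (-\<gamma>*(b-a)) * hb - ha) / (1 - exp (-\<gamma>*(b-a))^2) * exp (-\<gamma>*(x-a))
      + (exp (-\<gamma>*(b-a)) * ha - hb) / (1 - exp (-\<gamma>*(b-a))^2) * exp (-\<gamma>*(b-x))"

lemma mu_ne: fixes a b \<gamma> :: real assumes "a < b" "\<gamma> > 0" shows "1 - exp (-\<gamma>*(b-a))^2 \<noteq> 0"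
proof -
  have "\<gamma>*(b-a) > 0" using assms by (meson diff_gt_0_iff_gt mult_pos_pos)
  then have "exp (-\<gamma>*(b-a)) < 1" by simp
  moreover have "exp (-\<gamma>*(b-a)) > 0" by simp
  ultimately have "exp (-\<gamma>*(b-a))^2 < 1" by (simp add: power_less_one_iff)
  then show ?thesis by simp
qed

lemma Qn_alg:
  fixes \<mu> ea eb :: real
  assumes n: "1 - \<mu>^2 \<noteq> 0"
  shows "(g1 + \<alpha>*ea + \<beta>*eb + c*t1) + (\<mu> * (g3 + \<alpha>*\<mu> + \<beta> + c*t3) - (g2 + \<alpha> + \<beta>*\<mu> + c*t2)) / (1-\<mu>^2) * ea
     + (\<mu> * (g2 + \<alpha> + \<beta>*\<mu> + c*t2) - (g3 + \<alpha>*\<mu> + \<beta> + c*t3)) / (1-\<mu>^2) * eb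
   = (g1 + (\<mu>*g3 - g2)/(1-\<mu>^2)*ea + (\<mu>*g2 - g3)/(1-\<mu>^2)*eb)
     + c * (t1 + (\<mu>*t3 - t2)/(1-\<mu>^2)*ea + (\<mu>*t2 - t3)/(1-\<mu>^2)*eb)"
proof -
  have h1: "(\<mu> * (g3 + \<alpha>*\<mu> + \<beta> + c*t3) - (g2 + \<alpha> + \<beta>*\<mu> + c*t2)) = (\<mu>*g3 - g2) + c*(\<mu>*t3 - t2) - \<alpha>*(1-\<mu>^2)"
    by (simp add: algebra_simps power2_eq_square)
  have h2: "(\<mu> * (g2 + \<alpha> + \<beta>*\<mu> + c*t2) - (g3 + \<alpha>*\<mu> + \<beta> + c*t3)) = (\<mu>*g2 - g3) + c*(\<mu>*t2 - t3) - \<beta>*(1-\<mu>^2)"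
    by (simp add: algebra_simps power2_eq_square)
  have key: "\<And>X \<alpha>. (X - \<alpha>*(1-\<mu>^2))/(1-\<mu>^2) = X/(1-\<mu>^2) - \<alpha>" using n by (simp add: field_simps)
  show ?thesis unfolding h1 h2 key by (simp add: add_divide_distrib diff_divide_distrib algebra_simps)
qed

lemma Qn_lin:
  assumes "a < b" "\<gamma> > 0"
  shows "Qn \<gamma> a b x (g1 + \<alpha>*exp(-\<gamma>*(x-a)) + \<beta>*exp(-\<gamma>*(b-x)) + c*t1)
     (g2 + \<alpha> + \<beta>*exp (-\<gamma>*(b-a)) + c*t2) (g3 + \<alpha>*exp (-\<gamma>*(b-a)) + \<beta> + c*t3)
   = Qn \<gamma> a b x g1 g2 g3 + c * Qn \<gamma> a b x t1 t2 t3"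
proof -
  have n: "1 - exp (-\<gamma>*(b-a))^2 \<noteq> 0" by (rule mu_ne[OF assms])
  show ?thesis unfolding Qn_def by (rule Qn_alg[OF n])
qed

lemma D0_alg:
  fixes \<mu> :: real
  shows "vx - Ix - (\<mu>*(Ib - vb + Cb) - (Ia - va + Ca))/(1-\<mu>^2) * ea - (\<mu>*(Ia - va + Ca) - (Ib - vb + Cb))/(1-\<mu>^2) * eb
   = (vx - Ix) + (\<mu>*(vb - Ib) - (va - Ia))/(1-\<mu>^2)*ea + (\<mu>*(va - Ia) - (vb - Ib))/(1-\<mu>^2)*eb
     - (\<mu>*Cb - Ca)/(1-\<mu>^2)*ea - (\<mu>*Ca - Cb)/(1-\<mu>^2)*eb"
  by (simp add: algebra_simps diff_divide_distrib add_divide_distrib)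

lemma D0_Qn:
  assumes "a < b" "\<gamma> > 0"
  shows "D0 a b Ca Cb v \<gamma> x = Qn \<gamma> a b x (v x - I0 a b v \<gamma> x) (v a - I0 a b v \<gamma> a) (v b - I0 a b v \<gamma> b)
     - (exp (-\<gamma>*(b-a)) * Cb - Ca) / (1 - exp (-\<gamma>*(b-a))^2) * exp (-\<gamma>*(x-a))
     - (exp (-\<gamma>*(b-a)) * Ca - Cb) / (1 - exp (-\<gamma>*(b-a))^2) * exp (-\<gamma>*(b-x))"
proof -
  have n: "1 - exp (-\<gamma>*(b-a))^2 \<noteq> 0" by (rule mu_ne[OF assms])
  show ?thesis unfolding Qn_def D0_def Let_def by (rule D0_alg)
qed

lemma ea: "exp (-\<gamma>*(a-a)) = 1" by simp
lemma eb: "exp (-\<gamma>*(b-b)) = 1" by simp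

lemma D0_gen:
  assumes ab: "a < b" and C: "Cn_derivs n a b v Dv" and x: "x \<in> {a..b}" and g: "\<gamma> > 0"
  shows "2*m+2 \<le> n \<Longrightarrow> D0 a b Ca Cb v \<gamma> x =
      - (\<Sum>p=1..m. (1/\<gamma>)^(2*p) * Qn \<gamma> a b x (Dv (2*p) x) (Dv (2*p) a) (Dv (2*p) b))
      - (exp (-\<gamma>*(b-a)) * Cb - Ca) / (1 - exp (-\<gamma>*(b-a))^2) * exp (-\<gamma>*(x-a))
      - (exp (-\<gamma>*(b-a)) * Ca - Cb) / (1 - exp (-\<gamma>*(b-a))^2) * exp (-\<gamma>*(b-x))
      - (1/\<gamma>)^(2*m+2) * Qn \<gamma> a b x (I0 a b (Dv (2*m+2)) \<gamma> x) (I0 a b (Dv (2*m+2)) \<gamma> a) (I0 a b (Dv (2*m+2)) \<gamma> b)"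
proof (induction m)
  case 0
  have aa: "a \<in> {a..b}" and bb: "b \<in> {a..b}" using ab by auto
  have v: "v x = Dv 0 x" "v a = Dv 0 a" "v b = Dv 0 b" using C x ab unfolding Cn_derivs_def by auto
  have j: "Suc (Suc 0) \<le> n" using 0 by simp
  note s = I0_step[OF C j _ g]
  define al where "al = - Dv 0 a / 2 + Dv (Suc 0) a / (2*\<gamma>)"
  define be where "be = - Dv 0 b / 2 - Dv (Suc 0) b / (2*\<gamma>)"
  let ?T = "I0 a b (Dv 2) \<gamma>"
  have hx: "Dv 0 x - I0 a b (Dv 0) \<gamma> x = 0 + (-al)*exp(-\<gamma>*(x-a)) + (-be)*exp(-\<gamma>*(b-x)) + (-(1/\<gamma>^2)) * ?T x"
    using s[OF x] unfolding al_def be_def by (simp add: numeral_2_eq_2 algebra_simps)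
  have ha: "Dv 0 a - I0 a b (Dv 0) \<gamma> a = 0 + (-al) + (-be)*exp(-\<gamma>*(b-a)) + (-(1/\<gamma>^2)) * ?T a"
    using s[OF aa] unfolding al_def be_def by (simp add: numeral_2_eq_2 algebra_simps)
  have hb: "Dv 0 b - I0 a b (Dv 0) \<gamma> b = 0 + (-al)*exp(-\<gamma>*(b-a)) + (-be) + (-(1/\<gamma>^2)) * ?T b"
    using s[OF bb] unfolding al_def be_def by (simp add: numeral_2_eq_2 algebra_simps)
  have q0: "Qn \<gamma> a b x 0 0 0 = 0" unfolding Qn_def by simp
  show ?case unfolding D0_Qn[OF ab g] v I0_v[OF C] hx ha hb Qn_lin[OF ab g] q0
    by (simp add: power2_eq_square numeral_2_eq_2)
next
  case (Suc m)
  have aa: "a \<in> {a..b}" and bb: "b \<in> {a..b}" using ab by auto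
  have mm: "2*m+2 \<le> n" using Suc.prems by simp
  have j: "Suc (Suc (2*m+2)) \<le> n" using Suc.prems by simp
  note s = I0_step[OF C j _ g]
  define al where "al = - Dv (2*m+2) a / 2 + Dv (Suc (2*m+2)) a / (2*\<gamma>)"
  define be where "be = - Dv (2*m+2) b / 2 - Dv (Suc (2*m+2)) b / (2*\<gamma>)"
  let ?T = "I0 a b (Dv (2*m+4)) \<gamma>"
  have e4: "Suc (Suc (2*m+2)) = 2*m+4" by simp
  have hx: "I0 a b (Dv (2*m+2)) \<gamma> x = Dv (2*m+2) x + al*exp(-\<gamma>*(x-a)) + be*exp(-\<gamma>*(b-x)) + (1/\<gamma>^2) * ?T x"
    using s[OF x] unfolding al_def be_def e4 .
  have ha: "I0 a b (Dv (2*m+2)) \<gamma> a = Dv (2*m+2) a + al + be*exp(-\<gamma>*(b-a)) + (1/\<gamma>^2) * ?T a"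
    using s[OF aa] unfolding al_def be_def e4 by simp
  have hb: "I0 a b (Dv (2*m+2)) \<gamma> b = Dv (2*m+2) b + al*exp(-\<gamma>*(b-a)) + be + (1/\<gamma>^2) * ?T b"
    using s[OF bb] unfolding al_def be_def e4 by simp
  have e2: "2 * Suc m = 2*m+2" "2 * Suc m + 2 = 2*m+4" by simp_all
  show ?case unfolding Suc.IH[OF mm] hx ha hb Qn_lin[OF ab g] e2 sum.cl_ivl_Suc
    using g by (simp add: algebra_simps power_add power2_eq_square numeral_eq_Suc)
qed

theorem lemma1:
  fixes a b \<gamma> Ca Cb :: real and k :: nat
    and v :: "real \<Rightarrow> real" and Dv :: "nat \<Rightarrow> real \<Rightarrow> real"
  assumes "a < b" and "\<gamma> > 0" and "k \<ge> 1"
  defines "\<mu> \<equiv> exp (-\<gamma>*(b-a))"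
  shows
   "(Cn_derivs (k+1) a b v Dv \<longrightarrow>
      (\<forall>x\<in>{a..b}.
        DL a Ca v \<gamma> x =
          - (\<Sum>p=1..k. (-1/\<gamma>)^p * (Dv p x - Dv p a * exp (-\<gamma>*(x-a))))
          - (-1/\<gamma>)^(k+1) * IL a (Dv (k+1)) \<gamma> x + Ca * exp (-\<gamma>*(x-a))
      \<and> DR b Cb v \<gamma> x =
          - (\<Sum>p=1..k. (1/\<gamma>)^p * (Dv p x - Dv p b * exp (-\<gamma>*(b-x))))
          - (1/\<gamma>)^(k+1) * IR b (Dv (k+1)) \<gamma> x + Cb * exp (-\<gamma>*(b-x))))
    \<and> (Cn_derivs (2*k+2) a b v Dv \<longrightarrow>
      (\<forall>x\<in>{a..b}.
        D0 a b Ca Cb v \<gamma> x =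
          - (\<Sum>p=1..k. (1/\<gamma>)^(2*p) *
               (Dv (2*p) x
                + (\<mu> * Dv (2*p) b - Dv (2*p) a) / (1 - \<mu>^2) * exp (-\<gamma>*(x-a))
                + (\<mu> * Dv (2*p) a - Dv (2*p) b) / (1 - \<mu>^2) * exp (-\<gamma>*(b-x))))
          - (\<mu> * Cb - Ca) / (1 - \<mu>^2) * exp (-\<gamma>*(x-a))
          - (\<mu> * Ca - Cb) / (1 - \<mu>^2) * exp (-\<gamma>*(b-x))
          - (1/\<gamma>)^(2*k+2) *
              (I0 a b (Dv (2*k+2)) \<gamma> x
               + (\<mu> * I0 a b (Dv (2*k+2)) \<gamma> b - I0 a b (Dv (2*k+2)) \<gamma> a) / (1 - \<mu>^2)
                   * exp (-\<gamma>*(x-a))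
               + (\<mu> * I0 a b (Dv (2*k+2)) \<gamma> a - I0 a b (Dv (2*k+2)) \<gamma> b) / (1 - \<mu>^2)
                   * exp (-\<gamma>*(b-x)))))"
proof (intro conjI impI ballI)
  fix x assume C: "Cn_derivs (k+1) a b v Dv" and x: "x \<in> {a..b}"
  show "DL a Ca v \<gamma> x =
          - (\<Sum>p=1..k. (-1/\<gamma>)^p * (Dv p x - Dv p a * exp (-\<gamma>*(x-a))))
          - (-1/\<gamma>)^(k+1) * IL a (Dv (k+1)) \<gamma> x + Ca * exp (-\<gamma>*(x-a))"
    by (rule DL_gen[OF C x assms(2)]) simp
  show "DR b Cb v \<gamma> x =
          - (\<Sum>p=1..k. (1/\<gamma>)^p * (Dv p x - Dv p b * exp (-\<gamma>*(b-x))))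
          - (1/\<gamma>)^(k+1) * IR b (Dv (k+1)) \<gamma> x + Cb * exp (-\<gamma>*(b-x))"
    by (rule DR_gen[OF C x assms(2)]) simp
next
  fix x assume C: "Cn_derivs (2*k+2) a b v Dv" and x: "x \<in> {a..b}"
  show "D0 a b Ca Cb v \<gamma> x =
          - (\<Sum>p=1..k. (1/\<gamma>)^(2*p) *
               (Dv (2*p) x
                + (\<mu> * Dv (2*p) b - Dv (2*p) a) / (1 - \<mu>^2) * exp (-\<gamma>*(x-a))
                + (\<mu> * Dv (2*p) a - Dv (2*p) b) / (1 - \<mu>^2) * exp (-\<gamma>*(b-x))))
          - (\<mu> * Cb - Ca) / (1 - \<mu>^2) * exp (-\<gamma>*(x-a))
          - (\<mu> * Ca - Cb) / (1 - \<mu>^2) * exp (-\<gamma>*(b-x))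
          - (1/\<gamma>)^(2*k+2) *
              (I0 a b (Dv (2*k+2)) \<gamma> x
               + (\<mu> * I0 a b (Dv (2*k+2)) \<gamma> b - I0 a b (Dv (2*k+2)) \<gamma> a) / (1 - \<mu>^2)
                   * exp (-\<gamma>*(x-a))
               + (\<mu> * I0 a b (Dv (2*k+2)) \<gamma> a - I0 a b (Dv (2*k+2)) \<gamma> b) / (1 - \<mu>^2)
                   * exp (-\<gamma>*(b-x)))"
    using D0_gen[OF assms(1) C x assms(2), of k Ca Cb] unfolding Qn_def \<mu>_def by simp
qed

end
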